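(* Assume the standing assumptions and let $f$ satisfy (F). Let $\tilde s$ be the solution of the linearized equation below and $u$ the solution of the discrete heat problem $\partial_tu=\Delta_hu$ on $(0,T]\times\Omega_h^+$, $u(0,\cdot)=0$, $u(t,0)=\psi(t)$. Then $\tilde v:=\tilde s-u$ satisfies $\|\tilde v\|_{L^\infty([0,T]\times\Omega_h^+)}\le2\eta$.
   Context: Discrete setting: $h>0$, $\Omega_h^+=\{h,2h,\dots\}$, $\Omega_{h,0}^+=\Omega_h^+\cup\{0\}$, $\|f\|_{L^p(\Omega_h^+)}=(h\sum_{z\in\Omega_h^+}|f(z)|^p)^{1/p}$, $D^\pm_h$ the forward/backward differences $D^+_hf(x)=\frac{f(x+h)-f(x)}{h}$, $D^-_hf(x)=\frac{f(x)-f(x-h)}{h}$, $\Delta_h=D^+_hD^-_h$. Standing assumptions: $A=1$, $B\in\{-1,1\}$, $\varphi(c)=A+Bc$, $\lambda>0$, $T>0$, $\eta>0$; $\psi\in C^\beta([0,T])$ for some $\beta\in(1/4,1/2)$, $0\le\psi\le\eta$, $\psi(0)=0$; $0\le s_0\le\eta$, $s_0(0)=0$, $s_0,D^+_hs_0\in L^2(\Omega_h^+)$; $0<c_m\le c_0\le C_0$, $C_0-c_0,D^+_hc_0\in L^2(\Omega_h^+)$; $0<\varphi_{\min}\le\varphi(c)\le\varphi_{\max}$ for $c\in[0,C_0]$; if $B=1$ then $\eta<1$. Conditions (F) on Borel $f:[0,T]\times\Omega_{h,0}^+\to\mathbb{R}$: $f\in C([0,T],L^2(\Omega_h^+))$,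 $\sup_t\|f(t)\|^2_{L^2}+\int_0^T\|D^+_hf\|^2_{L^2}dt\le K$ for some $K>0$, $f(t,0)=\psi(t)$, $0\le f\le\eta$. Linearized equation: with $g=Ac_0[\varphi(c_0)e^{\lambda A\int_0^tf\,d\tau}-Bc_0]^{-1}$, $b_g=\frac{B}{2(A+Bg)}$, $\gamma_g=\lambda g$, $\tilde s$ is the bounded solution of $\partial_t\tilde s=\Delta_h\tilde s+b_g[D^+_hgD^+_h\tilde s+D^-_hgD^-_h\tilde s]+\gamma_g\tilde s(Bf-1)$ on $(0,T]\times\Omega_h^+$, $\tilde s(0,\cdot)=s_0$, $\tilde s(t,0)=\psi(t)$. *)

theory Defs
  imports "HOL-Analysis.Analysis"
begin

text \<open>Grid functions on \<Omega>_{h,0}^+ = {0,h,2h,...} are represented as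
  functions nat \<Rightarrow> real, with index k standing for the point k*h.\<close>

definition Dplus :: "real \<Rightarrow> (nat \<Rightarrow> real) \<Rightarrow> nat \<Rightarrow> real" where
  "Dplus h v k = (v (Suc k) - v k) / h"

definition Dminus :: "real \<Rightarrow> (nat \<Rightarrow> real) \<Rightarrow> nat \<Rightarrow> real" where
  "Dminus h v k = (v k - v (k - 1)) / h"

definition Lap :: "real \<Rightarrow> (nat \<Rightarrow> real) \<Rightarrow> nat \<Rightarrow> real" where
  "Lap h v k = Dplus h (Dminus h v) k"

text \<open>Squared L^2(\<Omega>_h^+) norm, h * sum over z = h, 2h, ... of |v z|^2,
  valued in ennreal (infinite iff v is not in L^2).\<close>
definition l2sq :: "real \<Rightarrow> (nat \<Rightarrow> real) \<Rightarrow> ennreal" where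
  "l2sq h v = ennreal h * (\<Sum>k. ennreal ((v (Suc k))\<^sup>2))"

definition holder_on :: "real \<Rightarrow> real set \<Rightarrow> (real \<Rightarrow> real) \<Rightarrow> bool" where
  "holder_on \<beta> S \<psi> \<longleftrightarrow> continuous_on S \<psi> \<and>
     (\<exists>M. \<forall>t\<in>S. \<forall>s\<in>S. \<bar>\<psi> t - \<psi> s\<bar> \<le> M * \<bar>t - s\<bar> powr \<beta>)"

definition condF :: "real \<Rightarrow> real \<Rightarrow> real \<Rightarrow> real \<Rightarrow> (real \<Rightarrow> real) \<Rightarrow> (real \<Rightarrow> nat \<Rightarrow> real) \<Rightarrow> bool" where
  "condF h T \<eta> K \<psi> f \<longleftrightarrow>
     K > 0 \<and>
     (\<forall>k. (\<lambda>t. f t k) \<in> borel_measurable (restrict_space lborel {0..T})) \<and>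
     (\<forall>t\<in>{0..T}. l2sq h (f t) < \<infinity>) \<and>
     (\<forall>t\<in>{0..T}. ((\<lambda>s. l2sq h (\<lambda>k. f s k - f t k)) \<longlongrightarrow> 0) (at t within {0..T})) \<and>
     (\<forall>t\<in>{0..T}. l2sq h (f t) +
        (\<integral>\<^sup>+ \<tau>. l2sq h (Dplus h (f \<tau>)) * indicator {0..T} \<tau> \<partial>lborel) \<le> ennreal K) \<and>
     (\<forall>t\<in>{0..T}. f t 0 = \<psi> t) \<and>
     (\<forall>t\<in>{0..T}. \<forall>k. 0 \<le> f t k \<and> f t k \<le> \<eta>)"

text \<open>The coefficient g (with A = 1, \<phi>(c) = 1 + B c) and b_g, \<gamma>_g.\<close>
definition gcoef :: "real \<Rightarrow> real \<Rightarrow> (nat \<Rightarrow> real) \<Rightarrow> (real \<Rightarrow> nat \<Rightarrow> real) \<Rightarrow> real \<Rightarrow> nat \<Rightarrow> real" where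
  "gcoef B lam c0 f t k =
     c0 k / ((1 + B * c0 k) * exp (lam * integral {0..t} (\<lambda>\<tau>. f \<tau> k)) - B * c0 k)"

definition bcoef :: "real \<Rightarrow> real \<Rightarrow> real" where
  "bcoef B g = B / (2 * (1 + B * g))"

definition is_lin_solution ::
  "real \<Rightarrow> real \<Rightarrow> real \<Rightarrow> real \<Rightarrow> (nat \<Rightarrow> real) \<Rightarrow> (real \<Rightarrow> nat \<Rightarrow> real) \<Rightarrow>
   (real \<Rightarrow> real) \<Rightarrow> (nat \<Rightarrow> real) \<Rightarrow> (real \<Rightarrow> nat \<Rightarrow> real) \<Rightarrow> bool" where
  "is_lin_solution h T B lam c0 f \<psi> s0 s \<longleftrightarrow>
     (let g = gcoef B lam c0 f in
     (\<forall>k. continuous_on {0..T} (\<lambda>t. s t k)) \<and>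
     (\<exists>M. \<forall>t\<in>{0..T}. \<forall>k. \<bar>s t k\<bar> \<le> M) \<and>
     (\<forall>k. s 0 k = s0 k) \<and>
     (\<forall>t\<in>{0..T}. s t 0 = \<psi> t) \<and>
     (\<forall>t\<in>{0<..T}. \<forall>k\<ge>1.
        ((\<lambda>\<tau>. s \<tau> k) has_real_derivative
           (Lap h (s t) k
            + bcoef B (g t k) * (Dplus h (g t) k * Dplus h (s t) k + Dminus h (g t) k * Dminus h (s t) k)
            + lam * g t k * s t k * (B * f t k - 1)))
        (at t within {0..T})))"

definition is_heat_solution ::
  "real \<Rightarrow> real \<Rightarrow> (real \<Rightarrow> real) \<Rightarrow> (real \<Rightarrow> nat \<Rightarrow> real) \<Rightarrow> bool" where
  "is_heat_solution h T \<psi> u \<longleftrightarrow>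
     (\<forall>k. continuous_on {0..T} (\<lambda>t. u t k)) \<and>
     (\<exists>M. \<forall>t\<in>{0..T}. \<forall>k. \<bar>u t k\<bar> \<le> M) \<and>
     (\<forall>k\<ge>1. u 0 k = 0) \<and>
     (\<forall>t\<in>{0..T}. u t 0 = \<psi> t) \<and>
     (\<forall>t\<in>{0<..T}. \<forall>k\<ge>1.
        ((\<lambda>\<tau>. u \<tau> k) has_real_derivative Lap h (u t) k) (at t within {0..T}))"

end

theory Submission
  imports Defs
begin

lemma deriv_nonneg_left:
  fixes f :: "real \<Rightarrow> real"
  assumes x: "0 < x" "x \<le> T" and der: "(f has_real_derivative D) (at x within {0..T})"
    and le: "\<And>y. 0 \<le> y \<Longrightarrow> y < x \<Longrightarrow> f y \<le> f x"
  shows "0 \<le> D"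
proof -
  have "(f has_real_derivative D) (at x within {0..x})"
    using has_field_derivative_subset[OF der] x by auto
  hence lim: "((\<lambda>y. (f y - f x)/(y - x)) \<longlongrightarrow> D) (at_left x)"
    using at_within_Icc_at_left[OF x(1)] by (simp add: has_field_derivative_iff)
  have ev: "eventually (\<lambda>y. 0 \<le> (f y - f x)/(y-x)) (at_left x)"
    using eventually_at_left_real[OF x(1)]
    by eventually_elim (auto intro!: divide_nonpos_neg le)
  show ?thesis using tendsto_lowerbound[OF lim ev] by simp
qed

lemma maxp:
  fixes w d a c :: "real \<Rightarrow> nat \<Rightarrow> real"
  assumes T: "0 < T"
    and bnd: "\<forall>t\<in>{0..T}. \<forall>k. w t k \<le> M"
    and cont: "\<forall>k. continuous_on {0..T} (\<lambda>t. w t k)"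
    and init: "\<forall>k\<ge>1. w 0 k \<le> 0"
    and bdry: "\<forall>t\<in>{0..T}. w t 0 \<le> 0"
    and der: "\<forall>t\<in>{0<..T}. \<forall>k\<ge>1. ((\<lambda>\<tau>. w \<tau> k) has_real_derivative d t k) (at t within {0..T})"
    and ineq: "\<forall>t\<in>{0<..T}. \<forall>k\<ge>1. w t k > 0 \<longrightarrow>
        d t k \<le> a t k * (w t (Suc k) - w t k) + c t k * (w t (k-1) - w t k)"
    and coef: "\<forall>t\<in>{0<..T}. \<forall>k\<ge>1. 0 \<le> a t k \<and> a t k \<le> A \<and> 0 \<le> c t k"
  shows "\<forall>t\<in>{0..T}. \<forall>k. w t k \<le> 0"
proof (rule ccontr)
  assume "\<not> ?thesis"
  then obtain t0 k0 where t0: "t0 \<in> {0..T}" and pos: "w t0 k0 > 0" by (auto simp: not_le)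
  define \<beta> where "\<beta> = 1/(max A 0 + 1)"
  have \<beta>0: "0 < \<beta>" unfolding \<beta>_def by simp
  have "\<beta> * A \<le> \<beta> * max A 0" using \<beta>0 by (intro mult_left_mono) auto
  also have "\<dots> < \<beta> * (max A 0 + 1)" using \<beta>0 by simp
  also have "\<dots> = 1" unfolding \<beta>_def by simp
  finally have \<beta>A: "\<beta> * A < 1" .
  define q where "q = 1 + T + \<beta> * real k0"
  have q: "q > 0" unfolding q_def using T \<beta>0 by (intro add_pos_nonneg) auto
  define \<epsilon> where "\<epsilon> = w t0 k0 / (2*q)"
  have \<epsilon>0: "\<epsilon> > 0" unfolding \<epsilon>_def using pos q by simp
  have \<epsilon>q: "\<epsilon> * q < w t0 k0" unfolding \<epsilon>_def using pos q by simp
  define W where "W t k = w t k - \<epsilon> * (1 + t + \<beta> * real k)" for t k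
  obtain N :: nat where N: "M / (\<epsilon> * \<beta>) < real N" using reals_Archimedean2 by blast
  have farneg: "W t k < 0" if "t \<in> {0..T}" "N \<le> k" for t k
  proof -
    have "M < \<epsilon> * \<beta> * real N" using N \<epsilon>0 \<beta>0 by (simp add: divide_less_eq mult.commute)
    also have "\<dots> \<le> \<epsilon> * \<beta> * real k" using that \<epsilon>0 \<beta>0 by simp
    finally have "M < \<epsilon> * \<beta> * real k" .
    moreover have "w t k \<le> M" using bnd that by auto
    moreover have "0 \<le> \<epsilon> * (1 + t)" using that \<epsilon>0 by simp
    ultimately show ?thesis unfolding W_def by (simp add: algebra_simps)
  qed
  have W0: "W t 0 < 0" if "t \<in> {0..T}" for t
  proof -
    have "w t 0 \<le> 0" using bdry that by auto
    moreover have "0 < \<epsilon> * (1 + t)" using \<epsilon>0 that by (intro mult_pos_pos) auto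
    ultimately show ?thesis unfolding W_def by simp
  qed
  have Wt0: "W 0 k < 0" for k
  proof (cases "k = 0")
    case True thus ?thesis using W0 T by simp
  next
    case False
    hence "w 0 k \<le> 0" using init by simp
    moreover have "0 < \<epsilon> * (1 + \<beta> * real k)" using \<epsilon>0 \<beta>0 by (intro mult_pos_pos add_pos_nonneg) auto
    ultimately show ?thesis unfolding W_def by simp
  qed
  define S where "S = {t\<in>{0..T}. \<exists>k<N. 0 \<le> W t k}"
  have W_t0: "W t0 k0 > 0"
  proof -
    have "\<epsilon> * (1 + t0 + \<beta> * real k0) \<le> \<epsilon> * q" unfolding q_def using t0 \<epsilon>0 by simp
    thus ?thesis unfolding W_def using \<epsilon>q by simp
  qed
  have "k0 < N" using farneg[OF t0] W_t0 by (meson less_asym not_le)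
  hence "t0 \<in> S" unfolding S_def using t0 W_t0 by auto
  hence Sne: "S \<noteq> {}" by auto
  have contW: "continuous_on {0..T} (\<lambda>t. W t k)" for k
    unfolding W_def using cont by (auto intro!: continuous_intros)
  have "S = (\<Union>k<N. {0..T} \<inter> (\<lambda>t. W t k) -` {0..})" unfolding S_def by auto
  moreover have "closed (\<Union>k<N. {0..T} \<inter> (\<lambda>t. W t k) -` {0..})"
    by (intro closed_UN ballI continuous_closed_preimage contW) auto
  ultimately have clS: "closed S" by simp
  have bS: "bdd_below S" unfolding S_def by (auto intro: bdd_belowI[of _ 0])
  define ts where "ts = Inf S"
  have tsS: "ts \<in> S" unfolding ts_def using closed_contains_Inf[OF Sne bS clS] .
  have before: "W t k < 0" if "0 \<le> t" "t < ts" for t k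
  proof -
    have "t \<notin> S" using cInf_lower[OF _ bS, of t] that unfolding ts_def by auto
    moreover have "t \<le> T" using that tsS unfolding S_def by auto
    ultimately show ?thesis using farneg[of t k] that unfolding S_def by (cases "k < N") auto
  qed
  obtain ks where ks: "ks < N" "0 \<le> W ts ks" and tsT: "ts \<in> {0..T}" using tsS unfolding S_def by auto
  have ts0: "0 < ts"
  proof (rule ccontr)
    assume "\<not> 0 < ts" hence "ts = 0" using tsT by auto
    thus False using ks Wt0[of ks] by simp
  qed
  have ks1: "ks \<ge> 1" using W0[OF tsT] ks by (cases ks) auto
  have le0: "W ts j \<le> 0" for j
  proof (rule ccontr)
    assume "\<not> W ts j \<le> 0"
    hence p: "W ts j > 0" by simp
    from contW[of j] tsT p obtain \<delta> where \<delta>: "\<delta> > 0"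
      and hd: "\<forall>x'\<in>{0..T}. dist x' ts < \<delta> \<longrightarrow> dist (W x' j) (W ts j) < W ts j"
      unfolding continuous_on_iff by blast
    define t1 where "t1 = max 0 (ts - \<delta>/2)"
    have t1: "0 \<le> t1" "t1 < ts" "t1 \<in> {0..T}" "dist t1 ts < \<delta>"
      unfolding t1_def using ts0 \<delta> tsT by (auto simp: dist_real_def)
    have "W t1 j < 0" using before t1 by simp
    moreover have "dist (W t1 j) (W ts j) < W ts j" using hd t1 by blast
    ultimately show False by (simp add: dist_real_def)
  qed
  have Wks: "W ts ks = 0" using le0[of ks] ks by simp
  have tsT': "ts \<in> {0<..T}" using ts0 tsT by auto
  have dW: "((\<lambda>\<tau>. W \<tau> ks) has_real_derivative d ts ks - \<epsilon>) (at ts within {0..T})"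
    unfolding W_def using der tsT' ks1
    by (auto intro!: derivative_eq_intros)
  have "0 \<le> d ts ks - \<epsilon>"
    by (rule deriv_nonneg_left[OF ts0 _ dW]) (use tsT before Wks in \<open>auto intro: less_imp_le\<close>)
  hence g1: "\<epsilon> \<le> d ts ks" by simp
  have "w ts ks = \<epsilon> * (1 + ts + \<beta> * real ks)" using Wks unfolding W_def by simp
  moreover have "0 < \<epsilon> * (1 + ts + \<beta> * real ks)" using \<epsilon>0 \<beta>0 ts0
    by (intro mult_pos_pos add_pos_nonneg) auto
  ultimately have wpos: "w ts ks > 0" by simp
  have e1: "w ts (Suc ks) - w ts ks = W ts (Suc ks) + \<epsilon> * \<beta>"
    using Wks unfolding W_def by (simp add: algebra_simps)
  have e2: "w ts (ks - 1) - w ts ks = W ts (ks - 1) - \<epsilon> * \<beta>"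
    using Wks ks1 unfolding W_def by (simp add: algebra_simps of_nat_diff)
  have co: "0 \<le> a ts ks" "a ts ks \<le> A" "0 \<le> c ts ks" using coef tsT' ks1 by auto
  have "d ts ks \<le> a ts ks * (W ts (Suc ks) + \<epsilon> * \<beta>) + c ts ks * (W ts (ks - 1) - \<epsilon> * \<beta>)"
  proof -
    have "d ts ks \<le> a ts ks * (w ts (Suc ks) - w ts ks) + c ts ks * (w ts (ks-1) - w ts ks)"
      using ineq tsT' ks1 wpos by blast
    thus ?thesis unfolding e1 e2 .
  qed
  also have "\<dots> \<le> a ts ks * (\<epsilon> * \<beta>) + 0"
  proof (rule add_mono)
    show "a ts ks * (W ts (Suc ks) + \<epsilon> * \<beta>) \<le> a ts ks * (\<epsilon> * \<beta>)"
      using co le0[of "Suc ks"] by (intro mult_left_mono) auto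
    have "W ts (ks - 1) - \<epsilon> * \<beta> \<le> 0" using le0[of "ks-1"] \<epsilon>0 \<beta>0
      by (smt (verit) mult_pos_pos)
    thus "c ts ks * (W ts (ks - 1) - \<epsilon> * \<beta>) \<le> 0" using co by (simp add: mult_nonneg_nonpos)
  qed
  also have "\<dots> \<le> A * (\<epsilon> * \<beta>)" using co \<epsilon>0 \<beta>0 by (simp add: mult_right_mono)
  also have "\<dots> < \<epsilon>" using \<beta>A \<epsilon>0 by (simp add: algebra_simps)
  finally show False using g1 by simp
qed


lemma real_ident0:
  fixes x y z g gm gp h B D :: real
  assumes "h \<noteq> 0" "D \<noteq> 0"
  shows "((x - y)/h - (y - z)/h)/h + B/(2*D) * ((gp - g)/h * ((x-y)/h) + (g - gm)/h * ((y - z)/h))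
    = (2*D + B*(gp-g))/(2*D*h^2) * (x - y) + (2*D - B*(g-gm))/(2*D*h^2) * (z - y)"
  using assms by (simp add: field_simps power2_eq_square)
lemma real_ident:
  fixes x y z g gm gp h B :: real
  assumes "h \<noteq> 0" "1 + B * g \<noteq> 0"
  shows "((x - y)/h - (y - z)/h)/h + B/(2*(1+B*g)) * ((gp - g)/h * ((x-y)/h) + (g - gm)/h * ((y - z)/h))
    = (2 + B*g + B*gp)/(2*(1+B*g)*h^2) * (x - y) + (2 + B*g + B*gm)/(2*(1+B*g)*h^2) * (z - y)"
proof -
  have a: "2*(1+B*g) + B*(gp-g) = 2 + B*g + B*gp" "2*(1+B*g) - B*(g-gm) = 2 + B*g + B*gm" by algebra+
  show ?thesis using real_ident0[OF assms, where x=x and y=y and z=z and g=g and gm=gm and gp=gp and B=B] unfolding a .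
qed

lemma op_ident:
  assumes "h \<noteq> 0" "1 + B * G k \<noteq> 0"
  shows "Lap h v k + bcoef B (G k) * (Dplus h G k * Dplus h v k + Dminus h G k * Dminus h v k) =
    (2 + B*G k + B*G (Suc k))/(2*(1+B*G k)*h^2) * (v (Suc k) - v k)
  + (2 + B*G k + B*G (k-1))/(2*(1+B*G k)*h^2) * (v (k-1) - v k)"
  using real_ident[OF assms, where x="v (Suc k)" and y="v k" and z="v (k-1)" and gp="G (Suc k)" and gm="G (k-1)"]
  unfolding Lap_def Dplus_def Dminus_def bcoef_def by simp


lemma der_shift: "(f has_real_derivative D) F \<Longrightarrow> ((\<lambda>x. f x - e) has_real_derivative D) F"
  by (auto intro!: derivative_eq_intros)

lemma der_neg: "(f has_real_derivative D) F \<Longrightarrow> ((\<lambda>x. - f x) has_real_derivative - D) F"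
  by (auto intro!: derivative_eq_intros)

lemma lap_ident: assumes "h \<noteq> 0"
  shows "Lap h v k = 1/h^2 * (v (Suc k) - v k) + 1/h^2 * (v (k-1) - v k)"
  using assms unfolding Lap_def Dplus_def Dminus_def by (simp add: field_simps power2_eq_square)

theorem mainTheorem8:
  fixes h T \<eta> lam B \<beta> K cm C0 \<phi>min \<phi>max :: real
    and \<psi> :: "real \<Rightarrow> real"
    and s0 c0 :: "nat \<Rightarrow> real"
    and f s u :: "real \<Rightarrow> nat \<Rightarrow> real"
  assumes h: "h > 0" and T: "T > 0" and eta: "\<eta> > 0" and lam: "lam > 0"
    and B: "B = -1 \<or> B = 1"
    and beta: "1/4 < \<beta>" "\<beta> < 1/2"
    and psi_holder: "holder_on \<beta> {0..T} \<psi>"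
    and psi_bounds: "\<forall>t\<in>{0..T}. 0 \<le> \<psi> t \<and> \<psi> t \<le> \<eta>"
    and psi0: "\<psi> 0 = 0"
    and s0_bounds: "\<forall>k. 0 \<le> s0 k \<and> s0 k \<le> \<eta>"
    and s00: "s0 0 = 0"
    and s0_L2: "l2sq h s0 < \<infinity>" "l2sq h (Dplus h s0) < \<infinity>"
    and cm: "0 < cm"
    and c0_bounds: "\<forall>k. cm \<le> c0 k \<and> c0 k \<le> C0"
    and c0_L2: "l2sq h (\<lambda>k. C0 - c0 k) < \<infinity>" "l2sq h (Dplus h c0) < \<infinity>"
    and phi: "0 < \<phi>min" "\<forall>c\<in>{0..C0}. \<phi>min \<le> 1 + B * c \<and> 1 + B * c \<le> \<phi>max"
    and B1: "B = 1 \<Longrightarrow> \<eta> < 1"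
    and F: "condF h T \<eta> K \<psi> f"
    and sol: "is_lin_solution h T B lam c0 f \<psi> s0 s"
    and heat: "is_heat_solution h T \<psi> u"
  shows "\<forall>t\<in>{0..T}. \<forall>k\<ge>1. \<bar>s t k - u t k\<bar> \<le> 2 * \<eta>"
proof -
  have fb: "\<forall>t\<in>{0..T}. \<forall>k. 0 \<le> f t k \<and> f t k \<le> \<eta>" using F unfolding condF_def by blast
  define g where "g = gcoef B lam c0 f"
  define m0 where "m0 = min 1 \<phi>min"
  have m0: "0 < m0" unfolding m0_def using phi by simp
  have gprop: "0 < g t k \<and> g t k \<le> C0 \<and> m0 \<le> 1 + B * g t k" if t: "t \<in> {0..T}" for t k
  proof -
    define I where "I = integral {0..t} (\<lambda>\<tau>. f \<tau> k)"
    have I0: "0 \<le> I"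
    proof (cases "(\<lambda>\<tau>. f \<tau> k) integrable_on {0..t}")
      case True thus ?thesis unfolding I_def using fb t by (intro integral_nonneg) auto
    next
      case False thus ?thesis unfolding I_def by (simp add: not_integrable_integral)
    qed
    define E where "E = exp (lam * I)"
    have E1: "1 \<le> E" unfolding E_def using lam I0 by simp
    have c: "cm \<le> c0 k" "c0 k \<le> C0" using c0_bounds by auto
    have p: "\<phi>min \<le> 1 + B * c0 k" using phi c cm by auto
    define D where "D = (1 + B * c0 k) * E - B * c0 k"
    have "0 \<le> (1 + B * c0 k) * (E - 1)" using p phi E1 by simp
    moreover have "D = (1 + B * c0 k) * (E - 1) + 1" unfolding D_def by algebra
    ultimately have D1: "1 \<le> D" by simp
    have gdef: "g t k = c0 k / D" unfolding g_def gcoef_def D_def E_def I_def by simp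
    have c0p: "0 < c0 k" using c cm by simp
    have gp: "0 < g t k" unfolding gdef using c0p D1 by simp
    have "c0 k * 1 \<le> c0 k * D" using c0p D1 by (intro mult_left_mono) auto
    hence gc: "g t k \<le> c0 k" unfolding gdef using D1 by (simp add: divide_le_eq)
    have "m0 \<le> 1 + B * g t k"
      using B
    proof
      assume "B = -1"
      thus ?thesis using gc p unfolding m0_def by simp
    next
      assume "B = 1"
      thus ?thesis using gp unfolding m0_def by simp
    qed
    thus ?thesis using gp gc c by simp
  qed
  have Bg: "\<bar>B * g t k\<bar> \<le> C0" if "t \<in> {0..T}" for t k
    using B gprop[OF that, of k] by auto
  define a where "a t k = (2 + B*g t k + B*g t (Suc k))/(2*(1+B*g t k)*h^2)" for t k
  define c where "c t k = (2 + B*g t k + B*g t (k-1))/(2*(1+B*g t k)*h^2)" for t k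
  define A where "A = (2 + 2*C0)/(2*m0*h^2)"
  have fracb: "0 \<le> (2 + B*g t k + B*g t j)/(2*(1+B*g t k)*h^2) \<and>
      (2 + B*g t k + B*g t j)/(2*(1+B*g t k)*h^2) \<le> A" if t: "t \<in> {0..T}" for t k j
  proof -
    have n1: "m0 \<le> 1 + B * g t k" "m0 \<le> 1 + B * g t j" using gprop[OF t] by auto
    have nn: "0 \<le> 2 + B*g t k + B*g t j" using n1 m0 by simp
    have nu: "2 + B*g t k + B*g t j \<le> 2 + 2*C0" using Bg[OF t, of k] Bg[OF t, of j] by simp
    have dpos: "0 < 2*m0*h^2" using m0 h by simp
    have dle: "2*m0*h^2 \<le> 2*(1+B*g t k)*h^2" using n1 h by simp
    have "0 < 2*(1+B*g t k)*h^2" using dpos dle by simp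
    hence "0 \<le> (2 + B*g t k + B*g t j)/(2*(1+B*g t k)*h^2)" using nn by simp
    moreover have "(2 + B*g t k + B*g t j)/(2*(1+B*g t k)*h^2) \<le> A"
      unfolding A_def by (rule frac_le) (use nn nu dpos dle in auto)
    ultimately show ?thesis by simp
  qed
  have coef: "\<forall>t\<in>{0<..T}. \<forall>k\<ge>1. 0 \<le> a t k \<and> a t k \<le> A \<and> 0 \<le> c t k"
    unfolding a_def c_def using fracb by auto
  define Ds where "Ds t k = Lap h (s t) k
            + bcoef B (g t k) * (Dplus h (g t) k * Dplus h (s t) k + Dminus h (g t) k * Dminus h (s t) k)
            + lam * g t k * s t k * (B * f t k - 1)" for t k
  have Dsid: "Ds t k = a t k * (s t (Suc k) - s t k) + c t k * (s t (k-1) - s t k)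
      + lam * g t k * s t k * (B * f t k - 1)" if "t \<in> {0..T}" for t k
  proof -
    have "1 + B * g t k \<noteq> 0" using gprop[OF that, of k] m0 by auto
    thus ?thesis unfolding Ds_def a_def c_def using op_ident[of h B "g t" k "s t"] h by simp
  qed
  have scont: "\<forall>k. continuous_on {0..T} (\<lambda>t. s t k)"
    and sbnd: "\<exists>M. \<forall>t\<in>{0..T}. \<forall>k. \<bar>s t k\<bar> \<le> M"
    and sinit: "\<forall>k. s 0 k = s0 k"
    and sbd: "\<forall>t\<in>{0..T}. s t 0 = \<psi> t"
    and sder: "\<forall>t\<in>{0<..T}. \<forall>k\<ge>1. ((\<lambda>\<tau>. s \<tau> k) has_real_derivative Ds t k) (at t within {0..T})"
    using sol unfolding is_lin_solution_def Let_def Ds_def g_def by auto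
  obtain Ms where Ms0: "\<forall>t\<in>{0..T}. \<forall>k. \<bar>s t k\<bar> \<le> Ms" using sbnd by blast
  have Ms: "\<forall>t\<in>{0..T}. \<forall>k. s t k - \<eta> \<le> Ms \<and> - s t k \<le> Ms"
  proof (intro ballI allI)
    fix t k assume "t \<in> {0..T}" hence "\<bar>s t k\<bar> \<le> Ms" using Ms0 by blast
    thus "s t k - \<eta> \<le> Ms \<and> - s t k \<le> Ms" using eta by linarith
  qed
  have ucont: "\<forall>k. continuous_on {0..T} (\<lambda>t. u t k)"
    and ubnd: "\<exists>M. \<forall>t\<in>{0..T}. \<forall>k. \<bar>u t k\<bar> \<le> M"
    and uinit: "\<forall>k\<ge>1. u 0 k = 0"
    and ubd: "\<forall>t\<in>{0..T}. u t 0 = \<psi> t"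
    and uder: "\<forall>t\<in>{0<..T}. \<forall>k\<ge>1. ((\<lambda>\<tau>. u \<tau> k) has_real_derivative Lap h (u t) k) (at t within {0..T})"
    using heat unfolding is_heat_solution_def by auto
  obtain Mu where Mu0: "\<forall>t\<in>{0..T}. \<forall>k. \<bar>u t k\<bar> \<le> Mu" using ubnd by blast
  have Mu: "\<forall>t\<in>{0..T}. \<forall>k. u t k - \<eta> \<le> Mu \<and> - u t k \<le> Mu"
  proof (intro ballI allI)
    fix t k assume "t \<in> {0..T}" hence "\<bar>u t k\<bar> \<le> Mu" using Mu0 by blast
    thus "u t k - \<eta> \<le> Mu \<and> - u t k \<le> Mu" using eta by linarith
  qed
  have Bf: "B * f t k - 1 \<le> 0" if "t \<in> {0..T}" for t k
    using B
  proof
    assume "B = -1"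
    moreover have "0 \<le> f t k" using fb that by blast
    ultimately show ?thesis by simp
  next
    assume B1': "B = 1"
    moreover have "f t k \<le> \<eta>" using fb that by blast
    ultimately show ?thesis using B1[OF B1'] by simp
  qed
  have s_up: "\<forall>t\<in>{0..T}. \<forall>k. s t k - \<eta> \<le> 0"
  proof (rule maxp[where d=Ds and a=a and c=c and A=A and M=Ms])
    show "\<forall>t\<in>{0<..T}. \<forall>k\<ge>1. s t k - \<eta> > 0 \<longrightarrow>
        Ds t k \<le> a t k * ((s t (Suc k) - \<eta>) - (s t k - \<eta>)) + c t k * ((s t (k-1) - \<eta>) - (s t k - \<eta>))"
    proof (intro ballI allI impI)
      fix t k assume t: "t \<in> {0<..T}" and k: "k \<ge> 1" and p: "s t k - \<eta> > 0"
      have t': "t \<in> {0..T}" using t by auto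
      have "0 \<le> lam * g t k * s t k" using lam gprop[OF t', of k] p eta by simp
      hence Z: "lam * g t k * s t k * (B * f t k - 1) \<le> 0" using Bf[OF t'] by (rule mult_nonneg_nonpos)
      have e1: "(s t (Suc k) - \<eta>) - (s t k - \<eta>) = s t (Suc k) - s t k"
        and e2: "(s t (k-1) - \<eta>) - (s t k - \<eta>) = s t (k-1) - s t k" by simp_all
      show "Ds t k \<le> a t k * ((s t (Suc k) - \<eta>) - (s t k - \<eta>)) + c t k * ((s t (k-1) - \<eta>) - (s t k - \<eta>))"
        unfolding e1 e2 using Dsid[OF t', of k] Z by linarith
    qed
  qed (use T Ms scont sinit s0_bounds sbd psi_bounds sder coef eta in
        \<open>auto intro!: der_shift continuous_intros\<close>)
  have s_lo: "\<forall>t\<in>{0..T}. \<forall>k. - s t k \<le> 0"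
  proof (rule maxp[where d="\<lambda>t k. - Ds t k" and a=a and c=c and A=A and M=Ms])
    show "\<forall>t\<in>{0<..T}. \<forall>k\<ge>1. - s t k > 0 \<longrightarrow>
        - Ds t k \<le> a t k * ((- s t (Suc k)) - (- s t k)) + c t k * ((- s t (k-1)) - (- s t k))"
    proof (intro ballI allI impI)
      fix t k assume t: "t \<in> {0<..T}" and k: "k \<ge> 1" and p: "- s t k > 0"
      have t': "t \<in> {0..T}" using t by auto
      have "lam * g t k * s t k \<le> 0" using lam gprop[OF t', of k] p
        by (simp add: mult_pos_neg less_imp_le)
      hence Z: "0 \<le> lam * g t k * s t k * (B * f t k - 1)" using Bf[OF t'] by (rule mult_nonpos_nonpos)
      have e1: "a t k * ((- s t (Suc k)) - (- s t k)) = - (a t k * (s t (Suc k) - s t k))"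
        and e2: "c t k * ((- s t (k-1)) - (- s t k)) = - (c t k * (s t (k-1) - s t k))"
        by (simp_all add: algebra_simps)
      show "- Ds t k \<le> a t k * ((- s t (Suc k)) - (- s t k)) + c t k * ((- s t (k-1)) - (- s t k))"
        unfolding e1 e2 using Dsid[OF t', of k] Z by linarith
    qed
  qed (use T Ms scont sinit s0_bounds sbd psi_bounds sder coef eta in
        \<open>auto intro!: der_neg continuous_intros\<close>)
  have hh: "0 \<le> 1/h^2" by simp
  have u_up: "\<forall>t\<in>{0..T}. \<forall>k. u t k - \<eta> \<le> 0"
  proof (rule maxp[where d="\<lambda>t k. Lap h (u t) k" and a="\<lambda>t k. 1/h^2" and c="\<lambda>t k. 1/h^2" and A="1/h^2" and M=Mu])
    show "\<forall>t\<in>{0<..T}. \<forall>k\<ge>1. u t k - \<eta> > 0 \<longrightarrow>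
        Lap h (u t) k \<le> 1/h^2 * ((u t (Suc k) - \<eta>) - (u t k - \<eta>)) + 1/h^2 * ((u t (k-1) - \<eta>) - (u t k - \<eta>))"
      using lap_ident h by simp
  qed (use T Mu ucont uinit ubd psi_bounds uder hh eta in
        \<open>auto intro!: der_shift continuous_intros\<close>)
  have u_lo: "\<forall>t\<in>{0..T}. \<forall>k. - u t k \<le> 0"
  proof (rule maxp[where d="\<lambda>t k. - Lap h (u t) k" and a="\<lambda>t k. 1/h^2" and c="\<lambda>t k. 1/h^2" and A="1/h^2" and M=Mu])
    show "\<forall>t\<in>{0<..T}. \<forall>k\<ge>1. - u t k > 0 \<longrightarrow>
        - Lap h (u t) k \<le> 1/h^2 * ((- u t (Suc k)) - (- u t k)) + 1/h^2 * ((- u t (k-1)) - (- u t k))"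
    proof (intro ballI allI impI)
      fix t k
      have hne: "h \<noteq> 0" using h by simp
      show "- Lap h (u t) k \<le> 1/h^2 * ((- u t (Suc k)) - (- u t k)) + 1/h^2 * ((- u t (k-1)) - (- u t k))"
        unfolding lap_ident[OF hne] by (simp add: algebra_simps)
    qed
  qed (use T Mu ucont uinit ubd psi_bounds uder hh eta in
        \<open>auto intro!: der_neg continuous_intros\<close>)
  show ?thesis
  proof (intro ballI allI impI)
    fix t and k :: nat assume t: "t \<in> {0..T}" and "k \<ge> 1"
    have "s t k - \<eta> \<le> 0" "- s t k \<le> 0" "u t k - \<eta> \<le> 0" "- u t k \<le> 0"
      using s_up s_lo u_up u_lo t by blast+
    thus "\<bar>s t k - u t k\<bar> \<le> 2 * \<eta>" using eta by simp
  qed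
qed

end
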